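(* Let $X=[0,1]^{\mathbb N_0}$ with the shift $\sigma$, let $h\in C^2([0,1]^2;\mathbb R)$ satisfy $D_2D_1h<0$ on $[0,1]^2$, and let $\varphi:X\to\mathbb R$ be given by $\varphi(\underline{x})=h(x_0,x_1)$. Then \[\mathscr{M}_\varphi=\Omega_\varphi=\bigcup_{a\in\mathrm{m}_h}\{a^\infty\}.\]
   Context: $X=[0,1]^{\mathbb N_0}$ carries the metric $d_X(\underline{x},\underline{y})=\sum_{i\ge0}|x_i-y_i|/2^{i+1}$, and $\sigma(\underline{x})_i=x_{i+1}$. For Lipschitz $\varphi:X\to\mathbb R$, $\alpha_\varphi=\inf_\mu\int\varphi\,d\mu$, the infimum over $\sigma$-invariant Borel probability measures; a measure attaining it is called minimizing, and the Mather set $\mathscr{M}_\varphi$ is the union of the supports of all minimizing measures. For $\underline{x},\underline{y}\in X$, $n\in\mathbb N$, $\varepsilon>0$ let $B(\underline{x},\underline{y},n;\varepsilon)=\{\underline{z}\in X: d_X(\underline{x},\underline{z})<\varepsilon,\ d_X(\sigma^n\underline{z},\underline{y})<\varepsilon\}$, $S_\varphi(\underline{x},\underline{y};\varepsilon)=\inf\{\sum_{i=0}^{n-1}(\varphi(\sigma^i\underline{z})-\alpha_\varphi): n\in\mathbb N,\ \underline{z}\in B(\underline{x},\underline{y},n;\varepsilon)\}$ and $S_\varphi(\underline{x},\underline{y})=\lim_{\varepsilon\to0}S_\varphi(\underline{x},\underline{y};\varepsilon)$ (the Mañé potential). The Aubry set is $\Omega_\varphi=\{\underline{x}\in X: S_\varphi(\underline{x},\underline{x})=0\}$.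 For $h:[0,1]^2\to\mathbb R$ continuous, $h^*=\min_{x\in[0,1]}h(x,x)$ and $\mathrm{m}_h=\{a\in[0,1]: h(a,a)=h^*\}$; $a^\infty$ denotes the constant sequence $aaa\ldots$. $D_i$ denotes the partial derivative in the $i$-th variable. *)

theory Defs
  imports "HOL-Analysis.Analysis" "HOL-Probability.Probability"
begin

text \<open>The space X = [0,1]^N0, realised as a subset of nat => real (product topology).\<close>
definition Xs :: "(nat \<Rightarrow> real) set" where
  "Xs = {x. \<forall>i. x i \<in> {0..1}}"

definition dX :: "(nat \<Rightarrow> real) \<Rightarrow> (nat \<Rightarrow> real) \<Rightarrow> real" where
  "dX x y = (\<Sum>i. \<bar>x i - y i\<bar> / 2 ^ (Suc i))"

definition shift :: "(nat \<Rightarrow> real) \<Rightarrow> (nat \<Rightarrow> real)" where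
  "shift x = (\<lambda>i. x (Suc i))"

text \<open>Shift-invariant Borel probability measures on X (measures on the Borel sets of
  nat => real concentrated on the closed set X).\<close>
definition invariant_prob :: "(nat \<Rightarrow> real) measure \<Rightarrow> bool" where
  "invariant_prob M \<longleftrightarrow> prob_space M \<and> sets M = sets borel \<and> emeasure M Xs = 1 \<and>
     (\<forall>A\<in>sets borel. emeasure M (shift -` A) = emeasure M A)"

definition pint :: "((nat \<Rightarrow> real) \<Rightarrow> real) \<Rightarrow> (nat \<Rightarrow> real) measure \<Rightarrow> real" where
  "pint \<phi> M = (LINT x:Xs|M. \<phi> x)"

definition alpha :: "((nat \<Rightarrow> real) \<Rightarrow> real) \<Rightarrow> real" where
  "alpha \<phi> = Inf {pint \<phi> M | M. invariant_prob M}"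

definition minimizing :: "((nat \<Rightarrow> real) \<Rightarrow> real) \<Rightarrow> (nat \<Rightarrow> real) measure \<Rightarrow> bool" where
  "minimizing \<phi> M \<longleftrightarrow> invariant_prob M \<and> pint \<phi> M = alpha \<phi>"

definition supp :: "(nat \<Rightarrow> real) measure \<Rightarrow> (nat \<Rightarrow> real) set" where
  "supp M = {x \<in> Xs. \<forall>\<epsilon>>0. emeasure M {z \<in> Xs. dX x z < \<epsilon>} > 0}"

definition Mather :: "((nat \<Rightarrow> real) \<Rightarrow> real) \<Rightarrow> (nat \<Rightarrow> real) set" where
  "Mather \<phi> = \<Union> {supp M | M. minimizing \<phi> M}"

definition Bset :: "(nat \<Rightarrow> real) \<Rightarrow> (nat \<Rightarrow> real) \<Rightarrow> nat \<Rightarrow> real \<Rightarrow> (nat \<Rightarrow> real) set" where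
  "Bset x y n \<epsilon> = {z \<in> Xs. dX x z < \<epsilon> \<and> dX ((shift ^^ n) z) y < \<epsilon>}"

definition Seps :: "((nat \<Rightarrow> real) \<Rightarrow> real) \<Rightarrow> (nat \<Rightarrow> real) \<Rightarrow> (nat \<Rightarrow> real) \<Rightarrow> real \<Rightarrow> ereal" where
  "Seps \<phi> x y \<epsilon> = Inf {ereal (\<Sum>i<n. \<phi> ((shift ^^ i) z) - alpha \<phi>) | n z. n \<ge> 1 \<and> z \<in> Bset x y n \<epsilon>}"

definition Mane :: "((nat \<Rightarrow> real) \<Rightarrow> real) \<Rightarrow> (nat \<Rightarrow> real) \<Rightarrow> (nat \<Rightarrow> real) \<Rightarrow> ereal" where
  "Mane \<phi> x y = Lim (at_right 0) (\<lambda>\<epsilon>. Seps \<phi> x y \<epsilon>)"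

definition Aubry :: "((nat \<Rightarrow> real) \<Rightarrow> real) \<Rightarrow> (nat \<Rightarrow> real) set" where
  "Aubry \<phi> = {x \<in> Xs. Mane \<phi> x x = 0}"

definition hstar :: "(real \<Rightarrow> real \<Rightarrow> real) \<Rightarrow> real" where
  "hstar h = Inf ((\<lambda>x. h x x) ` {0..1})"

definition mh :: "(real \<Rightarrow> real \<Rightarrow> real) \<Rightarrow> real set" where
  "mh h = {a \<in> {0..1}. h a a = hstar h}"

text \<open>h is C^2 on the closed square [0,1]^2, with partial derivatives (one-sided at the
  boundary) d1 = D_1 h, d2 = D_2 h, d11 = D_1 D_1 h, d12 = D_2 D_1 h, d21 = D_1 D_2 h,
  d22 = D_2 D_2 h, all continuous on the square.\<close>
definition C2_square ::
  "(real \<Rightarrow> real \<Rightarrow> real) \<Rightarrow> (real \<Rightarrow> real \<Rightarrow> real) \<Rightarrow> (real \<Rightarrow> real \<Rightarrow> real) \<Rightarrow>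
   (real \<Rightarrow> real \<Rightarrow> real) \<Rightarrow> (real \<Rightarrow> real \<Rightarrow> real) \<Rightarrow> (real \<Rightarrow> real \<Rightarrow> real) \<Rightarrow>
   (real \<Rightarrow> real \<Rightarrow> real) \<Rightarrow> bool" where
  "C2_square h d1 d2 d11 d12 d21 d22 \<longleftrightarrow>
     (\<forall>x\<in>{0..1}. \<forall>y\<in>{0..1}.
        ((\<lambda>t. h t y) has_real_derivative d1 x y) (at x within {0..1}) \<and>
        ((\<lambda>t. h x t) has_real_derivative d2 x y) (at y within {0..1}) \<and>
        ((\<lambda>t. d1 t y) has_real_derivative d11 x y) (at x within {0..1}) \<and>
        ((\<lambda>t. d1 x t) has_real_derivative d12 x y) (at y within {0..1}) \<and>
        ((\<lambda>t. d2 t y) has_real_derivative d21 x y) (at x within {0..1}) \<and>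
        ((\<lambda>t. d2 x t) has_real_derivative d22 x y) (at y within {0..1})) \<and>
     continuous_on ({0..1} \<times> {0..1}) (case_prod h) \<and>
     continuous_on ({0..1} \<times> {0..1}) (case_prod d1) \<and>
     continuous_on ({0..1} \<times> {0..1}) (case_prod d2) \<and>
     continuous_on ({0..1} \<times> {0..1}) (case_prod d11) \<and>
     continuous_on ({0..1} \<times> {0..1}) (case_prod d12) \<and>
     continuous_on ({0..1} \<times> {0..1}) (case_prod d21) \<and>
     continuous_on ({0..1} \<times> {0..1}) (case_prod d22)"

end

theory Submission
  imports Defs
begin


lemma mvt_real:
  fixes f f' :: "real \<Rightarrow> real"
  assumes "a \<le> b" "\<And>x. x \<in> {a..b} \<Longrightarrow> (f has_real_derivative f' x) (at x within {a..b})"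
  shows "\<exists>\<xi>\<in>{a..b}. f b - f a = f' \<xi> * (b - a)"
proof -
  have "\<exists>x\<in>{a..b}. f b - f a = (\<lambda>h. f' x * h) (b - a)"
    apply (rule mvt_very_simple[OF assms(1)])
    using assms(2) by (simp add: has_field_derivative_def)
  then show ?thesis by simp
qed

lemma mvt_sub:
  fixes f f' :: "real \<Rightarrow> real"
  assumes "a \<le> b" "{a..b} \<subseteq> S" "\<And>x. x \<in> S \<Longrightarrow> (f has_real_derivative f' x) (at x within S)"
  shows "\<exists>\<xi>\<in>{a..b}. f b - f a = f' \<xi> * (b - a)"
  apply (rule mvt_real[OF assms(1)])
  using assms(2,3) by (meson has_field_derivative_subset subsetD)

lemma key_ineq:
  fixes h d1 d12 u :: _ and c :: real
  assumes hd1: "\<And>x y. x \<in> {0..1} \<Longrightarrow> y \<in> {0..1} \<Longrightarrow> ((\<lambda>t. h t y) has_real_derivative d1 x y) (at x within {0..1})"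
    and hd12: "\<And>x y. x \<in> {0..1} \<Longrightarrow> y \<in> {0..1} \<Longrightarrow> ((\<lambda>t. d1 x t) has_real_derivative d12 x y) (at y within {0..1})"
    and neg: "\<And>x y. x \<in> {0..1} \<Longrightarrow> y \<in> {0..1} \<Longrightarrow> d12 x y \<le> - c"
    and du: "\<And>t. t \<in> {0..1} \<Longrightarrow> (u has_real_derivative - d1 t t) (at t within {0..1})"
    and x: "x \<in> {0..1}" and y: "y \<in> {0..1}"
  shows "h x y - h y y + u x - u y \<ge> c / 2 * (x - y)^2"
proof -
  have mono: "d1 t s2 + c * s2 \<le> d1 t s1 + c * s1" if t: "t \<in> {0..1}" and s: "0 \<le> s1" "s1 \<le> s2" "s2 \<le> 1" for t s1 s2
  proof -
    have "\<exists>\<xi>\<in>{s1..s2}. (d1 t s2 + c * s2) - (d1 t s1 + c * s1) = (d12 t \<xi> + c) * (s2 - s1)"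
      apply (rule mvt_sub[where S="{0..1}"])
      using s apply auto[2]
      by (auto intro!: derivative_eq_intros hd12[OF t])
    then obtain \<xi> where "\<xi> \<in> {s1..s2}" "(d1 t s2 + c * s2) - (d1 t s1 + c * s1) = (d12 t \<xi> + c) * (s2 - s1)" by blast
    moreover have "d12 t \<xi> + c \<le> 0" using neg[OF t, of \<xi>] \<open>\<xi> \<in> {s1..s2}\<close> s by auto
    ultimately have "(d12 t \<xi> + c) * (s2 - s1) \<le> 0" using s by (simp add: mult_nonpos_nonneg)
    then show ?thesis using \<open>(d1 t s2 + c * s2) - (d1 t s1 + c * s1) = (d12 t \<xi> + c) * (s2 - s1)\<close> by linarith
  qed
  define g where "g t = h t y - h y y + u t - u y - c / 2 * (t - y)^2" for t
  have dg: "(g has_real_derivative (d1 t y - d1 t t - c * (t - y))) (at t within {0..1})" if "t \<in> {0..1}" for t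
    unfolding g_def
    by (auto intro!: derivative_eq_intros hd1[OF that y] du[OF that] simp: power2_eq_square algebra_simps)
  have gy: "g y = 0" by (simp add: g_def)
  have "g x \<ge> 0"
  proof (cases "x \<le> y")
    case True
    then obtain \<xi> where xi: "\<xi> \<in> {x..y}" "g y - g x = (d1 \<xi> y - d1 \<xi> \<xi> - c * (\<xi> - y)) * (y - x)"
      using mvt_sub[of x y "{0..1}" g, OF True _ dg] x y by auto
    have "d1 \<xi> y + c * y \<le> d1 \<xi> \<xi> + c * \<xi>" using mono[of \<xi> \<xi> y] xi x y by auto
    then have "(d1 \<xi> y - d1 \<xi> \<xi> - c * (\<xi> - y)) \<le> 0" by (simp add: algebra_simps)
    then have "g y - g x \<le> 0" using xi True by (simp add: mult_nonpos_nonneg)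
    then show ?thesis using gy by simp
  next
    case False
    then obtain \<xi> where xi: "\<xi> \<in> {y..x}" "g x - g y = (d1 \<xi> y - d1 \<xi> \<xi> - c * (\<xi> - y)) * (x - y)"
      using mvt_sub[of y x "{0..1}" g, OF _ _ dg] x y by auto
    have "d1 \<xi> \<xi> + c * \<xi> \<le> d1 \<xi> y + c * y" using mono[of \<xi> y \<xi>] xi x y by auto
    then have "(d1 \<xi> y - d1 \<xi> \<xi> - c * (\<xi> - y)) \<ge> 0" by (simp add: algebra_simps)
    then have "g x - g y \<ge> 0" using xi False by simp
    then show ?thesis using gy by simp
  qed
  then show ?thesis by (simp add: g_def)
qed




lemma funpow_shift: "(shift ^^ n) z i = z (n + i)"
  by (induction n arbitrary: i) (auto simp: shift_def)

lemma Xs_funpow_shift: "z \<in> Xs \<Longrightarrow> (shift ^^ n) z \<in> Xs"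
  by (auto simp: Xs_def funpow_shift)

lemma Xs_shift: "z \<in> Xs \<Longrightarrow> shift z \<in> Xs"
  by (auto simp: Xs_def shift_def)

lemma summable_dX:
  assumes "x \<in> Xs" "z \<in> Xs"
  shows "summable (\<lambda>i. \<bar>x i - z i\<bar> / 2 ^ (Suc i))"
proof (rule summable_comparison_test[where g="\<lambda>i. (1/2) ^ (Suc i)"])
  show "\<exists>N. \<forall>n\<ge>N. norm (\<bar>x n - z n\<bar> / 2 ^ Suc n) \<le> (1 / 2) ^ Suc n"
  proof (intro exI allI impI)
    fix n
    have "0 \<le> x n" "x n \<le> 1" "0 \<le> z n" "z n \<le> 1" using assms by (auto simp: Xs_def)
    then have "\<bar>x n - z n\<bar> \<le> 1" by linarith
    then show "norm (\<bar>x n - z n\<bar> / 2 ^ Suc n) \<le> (1 / 2) ^ Suc n"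
      by (simp add: power_one_over divide_right_mono)
  qed
  show "summable (\<lambda>i. (1 / 2::real) ^ Suc i)"
    using summable_geometric[of "1/2::real"] by (simp add: summable_Suc_iff)
qed

lemma coord_le_dX:
  assumes "x \<in> Xs" "z \<in> Xs"
  shows "\<bar>x i - z i\<bar> \<le> 2 ^ (Suc i) * dX x z"
proof -
  have "\<bar>x i - z i\<bar> / 2 ^ (Suc i) \<le> dX x z"
    unfolding dX_def
    using sum_le_suminf[OF summable_dX[OF assms], of "{i}"] by auto
  then show ?thesis by (simp add: field_simps)
qed

lemma dX_self: "dX x x = 0" by (simp add: dX_def)

lemma Xs_borel[measurable]: "Xs \<in> sets borel"
proof -
  have "Xs = (\<Inter>i. (\<lambda>x. x i) -` {0..1})" by (auto simp: Xs_def)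
  moreover have "(\<lambda>x::nat\<Rightarrow>real. x i) \<in> borel_measurable borel" for i
    by (intro borel_measurable_continuous_onI continuous_on_product_coordinates)
  moreover have "closed ((\<lambda>x::nat\<Rightarrow>real. x i) -` {0..1})" for i
    by (rule closed_vimage[OF closed_atLeastAtMost continuous_on_product_coordinates])
  ultimately have "closed Xs" by (metis closed_INT)
  then show ?thesis by (rule borel_closed)
qed

lemma shift_meas[measurable]: "shift \<in> borel_measurable borel"
  unfolding shift_def
  by (intro borel_measurable_continuous_onI continuous_on_coordinatewise_then_product continuous_on_product_coordinates)

lemma dX_meas[measurable]: "(\<lambda>z. dX x z) \<in> borel_measurable borel"
proof -
  have "(\<lambda>z::nat\<Rightarrow>real. z i) \<in> borel_measurable borel" for i
    by (intro borel_measurable_continuous_onI continuous_on_product_coordinates)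
  then show ?thesis unfolding dX_def by measurable
qed




definition cl :: "real \<Rightarrow> real" where "cl t = max 0 (min 1 t)"

lemma cl_in: "cl t \<in> {0..1}" by (auto simp: cl_def)
lemma cl_id: "t \<in> {0..1} \<Longrightarrow> cl t = t" by (auto simp: cl_def)
lemma cont_cl: "continuous_on UNIV cl" unfolding cl_def by (intro continuous_intros)

lemma Xs_in: "x \<in> Xs \<Longrightarrow> x i \<in> {0..1}" by (auto simp: Xs_def)

lemma cont_sq:
  fixes f :: "real \<Rightarrow> real \<Rightarrow> real"
  assumes "continuous_on ({0..1}\<times>{0..1}) (case_prod f)"
  shows "continuous_on UNIV (\<lambda>x::nat\<Rightarrow>real. f (cl (x i)) (cl (x j)))"
proof -
  have "continuous_on UNIV (\<lambda>x::nat\<Rightarrow>real. (cl (x i), cl (x j)))"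
    by (intro continuous_intros continuous_on_compose2[OF cont_cl continuous_on_product_coordinates]) auto
  moreover have "range (\<lambda>x::nat\<Rightarrow>real. (cl (x i), cl (x j))) \<subseteq> {0..1}\<times>{0..1}" using cl_in by auto
  ultimately show ?thesis
    using continuous_on_compose2[OF assms] by force
qed

lemma meas_sq:
  fixes f :: "real \<Rightarrow> real \<Rightarrow> real"
  assumes "continuous_on ({0..1}\<times>{0..1}) (case_prod f)"
  shows "(\<lambda>x::nat\<Rightarrow>real. f (cl (x i)) (cl (x j))) \<in> borel_measurable borel"
  by (rule borel_measurable_continuous_onI[OF cont_sq[OF assms]])

lemma bnd_sq:
  fixes f :: "real \<Rightarrow> real \<Rightarrow> real"
  assumes "continuous_on ({0..1}\<times>{0..1}) (case_prod f)"
  shows "\<exists>B. \<forall>a\<in>{0..1}. \<forall>b\<in>{0..1}. \<bar>f a b\<bar> \<le> B"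
proof -
  have "compact (case_prod f ` ({0..1::real}\<times>{0..1::real}))"
    by (intro compact_continuous_image assms compact_Times compact_Icc)
  then obtain B where "\<forall>y\<in>case_prod f ` ({0..1::real}\<times>{0..1::real}). norm y \<le> B"
    using compact_imp_bounded bounded_iff by metis
  then show ?thesis by force
qed

lemma integ_sq:
  fixes f :: "real \<Rightarrow> real \<Rightarrow> real"
  assumes "continuous_on ({0..1}\<times>{0..1}) (case_prod f)" "finite_measure M" "sets M = sets borel"
  shows "integrable M (\<lambda>x::nat\<Rightarrow>real. f (cl (x i)) (cl (x j)))"
proof -
  obtain B where B: "\<forall>a\<in>{0..1}. \<forall>b\<in>{0..1}. \<bar>f a b\<bar> \<le> B" using bnd_sq[OF assms(1)] by blast
  have m: "(\<lambda>x::nat\<Rightarrow>real. f (cl (x i)) (cl (x j))) \<in> borel_measurable M"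
    using meas_sq[OF assms(1)] measurable_cong_sets[OF assms(3) refl] by blast
  show ?thesis
    by (rule finite_measure.integrable_const_bound[OF assms(2) _ m, where B=B]) (use B cl_in in auto)
qed

lemma shift_meas_M: "sets M = sets borel \<Longrightarrow> shift \<in> measurable M borel"
  using shift_meas measurable_cong_sets by blast

lemma distr_shift:
  assumes "invariant_prob M"
  shows "distr M borel shift = M"
proof (rule measure_eqI)
  have s: "sets M = sets borel" using assms by (simp add: invariant_prob_def)
  then have sp: "space M = UNIV" using sets_eq_imp_space_eq by fastforce
  show "sets (distr M borel shift) = sets M" using s by simp
  fix A assume "A \<in> sets (distr M borel shift)"
  then have A: "A \<in> sets borel" by simp
  then show "emeasure (distr M borel shift) A = emeasure M A"
    using assms shift_meas_M[OF s] by (simp add: emeasure_distr invariant_prob_def sp)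
qed

lemma integral_shift:
  fixes g :: "(nat \<Rightarrow> real) \<Rightarrow> real"
  assumes "invariant_prob M" "g \<in> borel_measurable borel"
  shows "(\<integral>x. g (shift x) \<partial>M) = (\<integral>x. g x \<partial>M)"
proof -
  have s: "sets M = sets borel" using assms by (simp add: invariant_prob_def)
  have "(\<integral>x. g (shift x) \<partial>M) = integral\<^sup>L (distr M borel shift) g"
    by (rule integral_distr[symmetric, OF shift_meas_M[OF s] assms(2)])
  then show ?thesis using distr_shift[OF assms(1)] by simp
qed

lemma funpow_shift_meas: "(shift ^^ k) \<in> borel_measurable borel"
proof (induction k)
  case 0 show ?case by simp
next
  case (Suc k) show ?case using measurable_comp[OF Suc shift_meas] by (simp add: o_def)
qed

lemma integral_shift_pow:
  fixes g :: "(nat \<Rightarrow> real) \<Rightarrow> real"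
  assumes "invariant_prob M" "g \<in> borel_measurable borel"
  shows "(\<integral>x. g ((shift ^^ k) x) \<partial>M) = (\<integral>x. g x \<partial>M)"
proof (induction k)
  case 0 then show ?case by simp
next
  case (Suc k)
  have m: "(\<lambda>x. g ((shift ^^ k) x)) \<in> borel_measurable borel"
    using measurable_comp[OF funpow_shift_meas assms(2)] by (simp add: o_def)
  have "(\<integral>x. g ((shift ^^ Suc k) x) \<partial>M) = (\<integral>x. g ((shift ^^ k) (shift x)) \<partial>M)"
    by (simp add: funpow_Suc_right del: funpow.simps)
  also have "\<dots> = (\<integral>x. g ((shift ^^ k) x) \<partial>M)" by (rule integral_shift[OF assms(1) m])
  finally show ?case using Suc by simp
qed

lemma AE_Xs:
  assumes "invariant_prob M"
  shows "AE x in M. x \<in> Xs"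
proof -
  interpret prob_space M using assms by (simp add: invariant_prob_def)
  have "prob Xs = 1" using assms by (simp add: invariant_prob_def measure_def)
  then show ?thesis by (rule AE_prob_1)
qed




lemma cont_pt:
  fixes f :: "real \<Rightarrow> real \<Rightarrow> real"
  assumes "continuous_on ({0..1}\<times>{0..1}) (case_prod f)" "a0 \<in> {0..1}" "b0 \<in> {0..1}" "e > 0"
  shows "\<exists>d>0. \<forall>a b. a \<in> {0..1} \<longrightarrow> b \<in> {0..1} \<longrightarrow> \<bar>a - a0\<bar> < d \<longrightarrow> \<bar>b - b0\<bar> < d \<longrightarrow> \<bar>f a b - f a0 b0\<bar> < e"
proof -
  obtain d where d: "d > 0" "\<forall>p\<in>{0..1}\<times>{0..1}. dist p (a0,b0) < d \<longrightarrow> dist (case_prod f p) (case_prod f (a0,b0)) < e"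
    using assms unfolding continuous_on_iff by (metis mem_Sigma_iff)
  show ?thesis
  proof (intro exI[of _ "d/2"] conjI allI impI)
    fix a b :: real assume ab: "a \<in> {0..1}" "b \<in> {0..1}" "\<bar>a - a0\<bar> < d/2" "\<bar>b - b0\<bar> < d/2"
    have "dist (a,b) (a0,b0) \<le> dist (a,b) (a0,b) + dist (a0,b) (a0,b0)" by (rule dist_triangle)
    also have "\<dots> = \<bar>a - a0\<bar> + \<bar>b - b0\<bar>" by (simp add: dist_Pair_Pair dist_real_def)
    finally have "dist (a,b) (a0,b0) < d" using ab by linarith
    then show "\<bar>f a b - f a0 b0\<bar> < e" using d ab by (auto simp: dist_real_def)
  qed (use d in auto)
qed

locale tw =
  fixes h :: "real \<Rightarrow> real \<Rightarrow> real" and u :: "real \<Rightarrow> real" and c Bu :: real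
  assumes key: "\<And>x y. x \<in> {0..1} \<Longrightarrow> y \<in> {0..1} \<Longrightarrow> h x y - h y y + u x - u y \<ge> c/2*(x-y)^2"
  and cpos: "c > 0"
  and ulip: "\<And>a b. a \<in> {0..1} \<Longrightarrow> b \<in> {0..1} \<Longrightarrow> \<bar>u a - u b\<bar> \<le> Bu * \<bar>a - b\<bar>"
  and hcont: "continuous_on ({0..1}\<times>{0..1}) (case_prod h)"
  and ucont: "continuous_on {0..1} u"
  and hs_le: "\<And>a. a \<in> {0..1} \<Longrightarrow> hstar h \<le> h a a"
  and hs_att: "\<exists>a\<in>{0..1}. h a a = hstar h"
  and Bupos: "Bu \<ge> 0"
begin

lemma cl_Xs[simp]: "x \<in> Xs \<Longrightarrow> cl (x i) = x i" by (rule cl_id[OF Xs_in])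

lemma meas_M: assumes "sets M = sets borel" "f \<in> borel_measurable borel" shows "f \<in> borel_measurable M"
  using assms(2) measurable_cong_sets[OF assms(1) refl] by blast

abbreviation "phi \<equiv> (\<lambda>x::nat\<Rightarrow>real. h (x 0) (x 1))"
abbreviation "hs \<equiv> hstar h"

definition Q :: "real \<Rightarrow> real \<Rightarrow> real" where "Q a b = h b b - hs + c/2*(a-b)^2"
definition L2 :: "real \<Rightarrow> real \<Rightarrow> real" where "L2 a b = h a b - hs + u a - u b"

lemma L2_ge_Q: "a \<in> {0..1} \<Longrightarrow> b \<in> {0..1} \<Longrightarrow> Q a b \<le> L2 a b"
  using key[of a b] by (simp add: Q_def L2_def)

lemma Q_nonneg: "a \<in> {0..1} \<Longrightarrow> b \<in> {0..1} \<Longrightarrow> 0 \<le> Q a b"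
  using hs_le[of b] cpos by (simp add: Q_def)

lemma Q_zero:
  assumes "a \<in> {0..1}" "b \<in> {0..1}" "Q a b = 0" shows "a = b \<and> h b b = hs"
proof -
  have 1: "0 \<le> h b b - hs" using hs_le[OF assms(2)] by simp
  have 2: "0 \<le> c/2*(a-b)^2" using cpos by simp
  have 3: "h b b - hs + c/2*(a-b)^2 = 0" using assms(3) by (simp add: Q_def)
  have "c/2*(a-b)^2 = 0" using 1 2 3 by linarith
  then have "(a-b)^2 = 0" using cpos by simp
  then show ?thesis using 1 2 3 by simp
qed

lemma cont_u1: "continuous_on ({0..1}\<times>{0..1}) (case_prod (\<lambda>(a::real) (b::real). u a))"
proof -
  have "continuous_on ({0..1}\<times>{0..1}) (\<lambda>p::real\<times>real. u (fst p))"
    by (rule continuous_on_compose2[OF ucont continuous_on_fst]) auto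
  then show ?thesis by (simp add: case_prod_unfold)
qed

lemma cont_u2: "continuous_on ({0..1}\<times>{0..1}) (case_prod (\<lambda>(a::real) (b::real). u b))"
proof -
  have "continuous_on ({0..1}\<times>{0..1}) (\<lambda>p::real\<times>real. u (snd p))"
    by (rule continuous_on_compose2[OF ucont continuous_on_snd]) auto
  then show ?thesis by (simp add: case_prod_unfold)
qed

lemma cont_hdiag: "continuous_on ({0..1}\<times>{0..1}) (case_prod (\<lambda>(a::real) (b::real). h b b))"
proof -
  have "continuous_on ({0..1}\<times>{0..1}) (\<lambda>p::real\<times>real. case_prod h (snd p, snd p))"
    by (rule continuous_on_compose2[OF hcont]) (auto intro!: continuous_intros)
  then show ?thesis by (simp add: case_prod_unfold)
qed

lemma cont_Q: "continuous_on ({0..1}\<times>{0..1}) (case_prod Q)"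
proof -
  have "continuous_on ({0..1}\<times>{0..1}) (\<lambda>p::real\<times>real. h (snd p) (snd p) - hs + c/2*(fst p - snd p)^2)"
    using cont_hdiag by (auto intro!: continuous_intros simp: case_prod_unfold)
  then show ?thesis by (simp add: case_prod_unfold Q_def)
qed

definition H :: "(nat\<Rightarrow>real) \<Rightarrow> real" where "H x = h (cl (x 0)) (cl (x 1))"

lemma pint_eq:
  assumes M: "invariant_prob M"
  shows "pint phi M = (\<integral>x. H x \<partial>M)"
proof -
  have s: "sets M = sets borel" using M by (simp add: invariant_prob_def)
  have "pint phi M = (\<integral>x. indicator Xs x * H x \<partial>M)"
    unfolding pint_def set_lebesgue_integral_def
    by (intro Bochner_Integration.integral_cong refl) (auto simp: indicator_def H_def)
  also have "\<dots> = (\<integral>x. H x \<partial>M)"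
  proof (rule integral_cong_AE)
    have mH: "H \<in> borel_measurable M"
      using meas_M[OF s meas_sq[OF hcont, where i=0 and j=1]] by (simp add: H_def[abs_def])
    then show "H \<in> borel_measurable M" .
    show "(\<lambda>x. indicator Xs x * H x) \<in> borel_measurable M"
      using mH Xs_borel s by (intro borel_measurable_times borel_measurable_indicator) auto
    show "AE x in M. indicator Xs x * H x = H x" using AE_Xs[OF M] by eventually_elim auto
  qed
  finally show ?thesis .
qed

definition Lf :: "(nat\<Rightarrow>real) \<Rightarrow> real" where "Lf x = H x - hs + u (cl (x 0)) - u (cl (x 1))"
definition Qf :: "(nat\<Rightarrow>real) \<Rightarrow> real" where "Qf x = Q (cl (x 0)) (cl (x 1))"

lemma Qf_meas: "Qf \<in> borel_measurable borel"
  using meas_sq[OF cont_Q, where i=0 and j=1] by (simp add: Qf_def[abs_def])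

lemma pint_minus:
  assumes M: "invariant_prob M"
  shows "pint phi M - hs = (\<integral>x. Lf x \<partial>M)"
proof -
  interpret prob_space M using M by (simp add: invariant_prob_def)
  have s: "sets M = sets borel" using M by (simp add: invariant_prob_def)
  have fm: "finite_measure M" by (rule finite_measure_axioms)
  have iH: "integrable M H" using integ_sq[OF hcont fm s, where i=0 and j=1] by (simp add: H_def[abs_def])
  have i1: "integrable M (\<lambda>x. u (cl (x 0)))" using integ_sq[OF cont_u1 fm s, where i=0] by simp
  have i2: "integrable M (\<lambda>x. u (cl (x 1)))" using integ_sq[OF cont_u2 fm s, where j=1] by simp
  have sh: "(\<integral>x. u (cl (x 1)) \<partial>M) = (\<integral>x. u (cl (x 0)) \<partial>M)"
  proof -
    have "(\<lambda>x::nat\<Rightarrow>real. u (cl (x 0))) \<in> borel_measurable borel"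
      using meas_sq[OF cont_u1, where i=0] by simp
    from integral_shift[OF M this] show ?thesis by (simp add: shift_def)
  qed
  have "(\<integral>x. Lf x \<partial>M) = (\<integral>x. H x \<partial>M) - hs + (\<integral>x. u (cl (x 0)) \<partial>M) - (\<integral>x. u (cl (x 1)) \<partial>M)"
    unfolding Lf_def using iH i1 i2 prob_space by simp
  then show ?thesis using sh pint_eq[OF M] by simp
qed

lemma Lf_ge_Qf: assumes "x \<in> Xs" shows "Qf x \<le> Lf x"
  using L2_ge_Q[OF Xs_in[OF assms, of 0] Xs_in[OF assms, of 1]] assms by (simp add: Qf_def Lf_def L2_def H_def)

lemma Qf_nonneg: assumes "x \<in> Xs" shows "0 \<le> Qf x"
  using Q_nonneg[OF Xs_in[OF assms, of 0] Xs_in[OF assms, of 1]] assms by (simp add: Qf_def)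

lemma pint_ge:
  assumes M: "invariant_prob M"
  shows "hs \<le> pint phi M"
proof -
  have "0 \<le> (\<integral>x. Lf x \<partial>M)"
  proof (rule integral_nonneg_AE)
    show "AE x in M. 0 \<le> Lf x" using AE_Xs[OF M]
    proof eventually_elim
      case (elim x) then show ?case using Lf_ge_Qf Qf_nonneg by (meson order_trans)
    qed
  qed
  then show ?thesis using pint_minus[OF M] by simp
qed

end



lemma coord_meas[measurable]: "(\<lambda>z::nat\<Rightarrow>real. z i) \<in> borel_measurable borel"
  by (intro borel_measurable_continuous_onI continuous_on_product_coordinates)

lemma const_Xs: "a \<in> {0..1} \<Longrightarrow> (\<lambda>_::nat. a) \<in> Xs" by (simp add: Xs_def)

lemma shift_const[simp]: "shift (\<lambda>_. a) = (\<lambda>_. a)" by (simp add: shift_def)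

context tw begin

lemma ret_inv:
  assumes a: "a \<in> {0..1}"
  shows "invariant_prob (return borel (\<lambda>_::nat. a))"
proof -
  have cX: "(\<lambda>_::nat. a) \<in> Xs" using const_Xs[OF a] .
  have "\<forall>A\<in>sets borel. emeasure (return borel (\<lambda>_::nat. a)) (shift -` A) = emeasure (return borel (\<lambda>_::nat. a)) A"
  proof
    fix A :: "(nat\<Rightarrow>real) set" assume A: "A \<in> sets borel"
    have "shift -` A \<in> sets borel" using measurable_sets[OF shift_meas A] by simp
    then show "emeasure (return borel (\<lambda>_::nat. a)) (shift -` A) = emeasure (return borel (\<lambda>_::nat. a)) A"
      using A by (simp add: indicator_def)
  qed
  then show ?thesis
    unfolding invariant_prob_def using cX Xs_borel by (auto intro!: prob_space_return)
qed

lemma ret_pint: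
  assumes a: "a \<in> {0..1}"
  shows "pint phi (return borel (\<lambda>_::nat. a)) = h a a"
proof -
  have "H \<in> borel_measurable borel" using meas_sq[OF hcont, where i=0 and j=1] by (simp add: H_def[abs_def])
  then have "(\<integral>x. H x \<partial>return borel (\<lambda>_::nat. a)) = H (\<lambda>_. a)" by (intro integral_return) auto
  then show ?thesis using pint_eq[OF ret_inv[OF a]] a by (simp add: H_def cl_id)
qed

lemma alpha_eq: "alpha phi = hs"
proof -
  obtain a0 where a0: "a0 \<in> {0..1}" "h a0 a0 = hs" using hs_att by blast
  show ?thesis unfolding alpha_def
  proof (rule cInf_eq_minimum)
    show "hs \<in> {pint phi M |M. invariant_prob M}"
      using ret_inv[OF a0(1)] ret_pint[OF a0(1)] a0(2) by force
    fix y assume "y \<in> {pint phi M |M. invariant_prob M}"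
    then show "hs \<le> y" using pint_ge by blast
  qed
qed

lemma integrable_Qf:
  assumes M: "invariant_prob M"
  shows "integrable M Qf" "integrable M Lf" "integrable M (\<lambda>z. Q (cl (z i)) (cl (z j)))"
proof -
  interpret prob_space M using M by (simp add: invariant_prob_def)
  have s: "sets M = sets borel" using M by (simp add: invariant_prob_def)
  have fm: "finite_measure M" by (rule finite_measure_axioms)
  show "integrable M (\<lambda>z. Q (cl (z i)) (cl (z j)))" using integ_sq[OF cont_Q fm s] by simp
  show "integrable M Qf" using integ_sq[OF cont_Q fm s, where i=0 and j=1] by (simp add: Qf_def[abs_def])
  have iH: "integrable M H" using integ_sq[OF hcont fm s, where i=0 and j=1] by (simp add: H_def[abs_def])
  have i1: "integrable M (\<lambda>x. u (cl (x 0)))" using integ_sq[OF cont_u1 fm s, where i=0] by simp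
  have i2: "integrable M (\<lambda>x. u (cl (x 1)))" using integ_sq[OF cont_u2 fm s, where j=1] by simp
  show "integrable M Lf" unfolding Lf_def[abs_def] using iH i1 i2 by auto
qed

lemma min_int_Q:
  assumes M: "minimizing phi M"
  shows "(\<integral>z. Q (cl (z k)) (cl (z (Suc k))) \<partial>M) = 0"
proof -
  have inv: "invariant_prob M" using M by (simp add: minimizing_def)
  have L0: "(\<integral>x. Lf x \<partial>M) = 0" using pint_minus[OF inv] M alpha_eq by (simp add: minimizing_def)
  have "(\<integral>x. Qf x \<partial>M) \<le> (\<integral>x. Lf x \<partial>M)"
    by (rule integral_mono_AE[OF integrable_Qf(1,2)[OF inv]]) (use AE_Xs[OF inv] Lf_ge_Qf in \<open>auto elim: AE_mp\<close>)
  moreover have "0 \<le> (\<integral>x. Qf x \<partial>M)"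
    by (rule integral_nonneg_AE) (use AE_Xs[OF inv] Qf_nonneg in \<open>auto elim: AE_mp\<close>)
  ultimately have "(\<integral>x. Qf x \<partial>M) = 0" using L0 by simp
  moreover have "(\<integral>z. Qf ((shift ^^ k) z) \<partial>M) = (\<integral>x. Qf x \<partial>M)"
    by (rule integral_shift_pow[OF inv Qf_meas])
  ultimately show ?thesis by (simp add: Qf_def funpow_shift)
qed

lemma supp_Q:
  assumes M: "minimizing phi M" and x: "x \<in> supp M"
  shows "Q (x k) (x (Suc k)) = 0"
proof (rule ccontr)
  have inv: "invariant_prob M" using M by (simp add: minimizing_def)
  interpret prob_space M using inv by (simp add: invariant_prob_def)
  have s: "sets M = sets borel" using inv by (simp add: invariant_prob_def)
  have xX: "x \<in> Xs" using x by (simp add: supp_def)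
  define q where "q = Q (x k) (x (Suc k))"
  assume "Q (x k) (x (Suc k)) \<noteq> 0"
  moreover have "0 \<le> q" unfolding q_def by (rule Q_nonneg[OF Xs_in[OF xX] Xs_in[OF xX]])
  ultimately have q: "q > 0" unfolding q_def by simp
  obtain \<eta> where \<eta>0: "\<eta> > 0" and \<eta>1: "\<forall>a b. a \<in> {0..1} \<longrightarrow> b \<in> {0..1} \<longrightarrow> \<bar>a - x k\<bar> < \<eta> \<longrightarrow> \<bar>b - x (Suc k)\<bar> < \<eta> \<longrightarrow> \<bar>Q a b - Q (x k) (x (Suc k))\<bar> < q/2"
    using cont_pt[OF cont_Q Xs_in[OF xX, of k] Xs_in[OF xX, of "Suc k"], of "q/2"] q by auto
  have \<eta>: "\<eta> > 0" "\<And>a b. a \<in> {0..1} \<Longrightarrow> b \<in> {0..1} \<Longrightarrow> \<bar>a - x k\<bar> < \<eta> \<Longrightarrow> \<bar>b - x (Suc k)\<bar> < \<eta> \<Longrightarrow> \<bar>Q a b - q\<bar> < q/2"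
    using \<eta>0 \<eta>1 unfolding q_def by auto
  define S where "S = {z \<in> space borel. z \<in> Xs \<and> \<bar>z k - x k\<bar> < \<eta> \<and> \<bar>z (Suc k) - x (Suc k)\<bar> < \<eta>}"
  have Sm: "S \<in> sets borel" unfolding S_def by measurable
  define \<epsilon> where "\<epsilon> = \<eta> / 2 ^ (k+2)"
  have \<epsilon>: "\<epsilon> > 0" using \<eta> by (simp add: \<epsilon>_def)
  have sub: "{z \<in> Xs. dX x z < \<epsilon>} \<subseteq> S"
  proof
    fix z assume z: "z \<in> {z \<in> Xs. dX x z < \<epsilon>}"
    then have zX: "z \<in> Xs" and d: "dX x z < \<epsilon>" by auto
    have "\<bar>x k - z k\<bar> \<le> 2 ^ Suc k * dX x z" by (rule coord_le_dX[OF xX zX])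
    also have "\<dots> < 2 ^ Suc k * \<epsilon>" using d by simp
    also have "\<dots> \<le> \<eta>" using \<eta> by (simp add: \<epsilon>_def field_simps)
    finally have 1: "\<bar>z k - x k\<bar> < \<eta>" by simp
    have "\<bar>x (Suc k) - z (Suc k)\<bar> \<le> 2 ^ Suc (Suc k) * dX x z" by (rule coord_le_dX[OF xX zX])
    also have "\<dots> < 2 ^ Suc (Suc k) * \<epsilon>" using d by simp
    also have "\<dots> = \<eta>" using \<eta> by (simp add: \<epsilon>_def field_simps)
    finally have 2: "\<bar>z (Suc k) - x (Suc k)\<bar> < \<eta>" by simp
    show "z \<in> S" using 1 2 zX by (simp add: S_def)
  qed
  have "0 < emeasure M {z \<in> Xs. dX x z < \<epsilon>}" using x \<epsilon> by (simp add: supp_def)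
  also have "\<dots> \<le> emeasure M S" by (rule emeasure_mono[OF sub]) (simp add: s Sm)
  finally have "0 < emeasure M S" .
  then have mS: "0 < measure M S" by (simp add: emeasure_eq_measure)
  have "(\<integral>z. q/2 * indicator S z \<partial>M) \<le> (\<integral>z. Q (cl (z k)) (cl (z (Suc k))) \<partial>M)"
  proof (rule integral_mono_AE)
    show "integrable M (\<lambda>z. q/2 * indicator S z)" using Sm s by (intro integrable_mult_right integrable_real_indicator) (auto simp: emeasure_eq_measure)
    show "integrable M (\<lambda>z. Q (cl (z k)) (cl (z (Suc k))))" by (rule integrable_Qf(3)[OF inv])
    show "AE z in M. q/2 * indicator S z \<le> Q (cl (z k)) (cl (z (Suc k)))" using AE_Xs[OF inv]
    proof eventually_elim
      case (elim z)
      show ?case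
      proof (cases "z \<in> S")
        case True
        then have "\<bar>Q (z k) (z (Suc k)) - q\<bar> < q/2" using \<eta>(2)[OF Xs_in[OF elim] Xs_in[OF elim]] by (simp add: S_def)
        then have "q/2 \<le> Q (z k) (z (Suc k))" by linarith
        then show ?thesis using True elim by (simp add: indicator_def)
      next
        case False
        then show ?thesis using Q_nonneg[OF Xs_in[OF elim] Xs_in[OF elim]] elim by (simp add: indicator_def)
      qed
    qed
  qed
  moreover have "(\<integral>z. q/2 * indicator S z \<partial>M) = q/2 * measure M S"
  proof -
    have sp: "space M = UNIV" using sets_eq_imp_space_eq[OF s] by simp
    show ?thesis by (simp add: sp)
  qed
  ultimately have "q/2 * measure M S \<le> 0" using min_int_Q[OF M, of k] by linarith
  moreover have "q/2 * measure M S > 0" using q mS by simp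
  ultimately show False by simp
qed

lemma const_of_Q:
  assumes xX: "x \<in> Xs" and Q0: "\<And>k. Q (x k) (x (Suc k)) = 0"
  shows "x = (\<lambda>_. x 0) \<and> x 0 \<in> mh h"
proof -
  have st: "x (Suc k) = x k" for k using Q_zero[OF Xs_in[OF xX] Xs_in[OF xX] Q0[of k]] by simp
  have xk: "x k = x 0" for k by (induction k) (auto simp: st)
  note xk
  moreover have "h (x 1) (x 1) = hs" using Q_zero[OF Xs_in[OF xX] Xs_in[OF xX] Q0[of 0]] by simp
  moreover have "x 1 = x 0" using st[of 0] by simp
  ultimately have "h (x 0) (x 0) = hs" by metis
  then show ?thesis using Xs_in[OF xX, of 0] xk by (auto simp: mh_def)
qed

lemma Mather_sub: "Mather phi \<subseteq> (\<lambda>a. (\<lambda>_::nat. a)) ` mh h"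
proof
  fix x assume "x \<in> Mather phi"
  then obtain M where M: "minimizing phi M" "x \<in> supp M" by (auto simp: Mather_def)
  have xX: "x \<in> Xs" using M(2) by (simp add: supp_def)
  have "x = (\<lambda>_. x 0) \<and> x 0 \<in> mh h" by (rule const_of_Q[OF xX supp_Q[OF M]])
  then show "x \<in> (\<lambda>a. (\<lambda>_::nat. a)) ` mh h" by (metis image_eqI)
qed

lemma Mather_sup: "(\<lambda>a. (\<lambda>_::nat. a)) ` mh h \<subseteq> Mather phi"
proof
  fix x assume "x \<in> (\<lambda>a. (\<lambda>_::nat. a)) ` mh h"
  then obtain a where a: "a \<in> {0..1}" "h a a = hs" and x: "x = (\<lambda>_. a)" by (auto simp: mh_def)
  have min: "minimizing phi (return borel x)"
    using ret_inv[OF a(1)] ret_pint[OF a(1)] a(2) alpha_eq x by (simp add: minimizing_def)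
  have xX: "x \<in> Xs" using const_Xs[OF a(1)] x by simp
  have "x \<in> supp (return borel x)"
  proof -
    have "emeasure (return borel x) {z \<in> Xs. dX x z < e} = 1" if "e > 0" for e
    proof -
      have "{z \<in> Xs. dX x z < e} = {z \<in> space borel. z \<in> Xs \<and> dX x z < e}" by simp
      also have "\<dots> \<in> sets borel" by measurable
      finally have "{z \<in> Xs. dX x z < e} \<in> sets borel" .
      then show ?thesis using xX that by (simp add: dX_self)
    qed
    then show ?thesis using xX by (simp add: supp_def)
  qed
  then show "x \<in> Mather phi" using min by (auto simp: Mather_def)
qed

end



lemma lim_antimono:
  fixes f :: "real \<Rightarrow> ereal"
  assumes mono: "\<And>a b. 0 < a \<Longrightarrow> a \<le> b \<Longrightarrow> f b \<le> f a"
  shows "(f \<longlongrightarrow> (SUP e\<in>{0<..}. f e)) (at_right 0)"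
proof (rule increasing_tendsto)
  show "\<forall>\<^sub>F n in at_right 0. f n \<le> (SUP e\<in>{0<..}. f e)"
    using eventually_at_right_less[of "0::real"] by eventually_elim (auto intro: SUP_upper)
  fix y assume "y < (SUP e\<in>{0<..}. f e)"
  then obtain e where e: "e > 0" "y < f e" by (auto simp: less_SUP_iff)
  show "\<forall>\<^sub>F n in at_right 0. y < f n"
    using eventually_at_right_real[OF e(1)]
  proof eventually_elim
    case (elim n) then show ?case using mono[of n e] e by force
  qed
qed

context tw begin

lemma telesc:
  assumes "z \<in> Xs"
  shows "(\<Sum>i<n. phi ((shift ^^ i) z) - hs) = (\<Sum>i<n. L2 (z i) (z (Suc i))) + u (z n) - u (z 0)"
  by (induction n) (auto simp: funpow_shift L2_def)

lemma L2_nonneg: "a \<in> {0..1} \<Longrightarrow> b \<in> {0..1} \<Longrightarrow> 0 \<le> L2 a b"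
  using L2_ge_Q Q_nonneg order_trans by blast

lemma sumL2_nonneg: "z \<in> Xs \<Longrightarrow> 0 \<le> (\<Sum>i<n. L2 (z i) (z (Suc i)))"
  by (intro sum_nonneg L2_nonneg Xs_in)

lemma Seps_mono: "0 < a \<Longrightarrow> a \<le> b \<Longrightarrow> Seps phi x x b \<le> Seps phi x x a"
  unfolding Seps_def Bset_def by (intro Inf_superset_mono) force

lemma Mane_SUP: "Mane phi x x = (SUP e\<in>{0<..}. Seps phi x x e)"
  unfolding Mane_def
  by (rule tendsto_Lim[OF trivial_limit_at_right_real lim_antimono]) (rule Seps_mono)

lemma set_eq_cong:
  assumes "\<And>n z. P n z \<Longrightarrow> f n z = g n z"
  shows "{f n z | n z. P n z} = {g n z | n z. P n z}"
proof -
  have "(\<exists>n z. v = f n z \<and> P n z) \<longleftrightarrow> (\<exists>n z. v = g n z \<and> P n z)" for v using assms by metis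
  then show ?thesis by blast
qed

lemma Seps_eq: "Seps phi x y e = Inf {ereal ((\<Sum>i<n. L2 (z i) (z (Suc i))) + u (z n) - u (z 0)) | n z. n \<ge> 1 \<and> z \<in> Bset x y n e}"
proof -
  have "{ereal (\<Sum>i<n. phi ((shift ^^ i) z) - alpha phi) | n z. n \<ge> 1 \<and> z \<in> Bset x y n e} =
        {ereal ((\<Sum>i<n. L2 (z i) (z (Suc i))) + u (z n) - u (z 0)) | n z. n \<ge> 1 \<and> z \<in> Bset x y n e}"
    by (rule set_eq_cong) (use telesc alpha_eq in \<open>auto simp: Bset_def\<close>)
  then show ?thesis by (simp add: Seps_def)
qed

lemma Aubry_sup:
  assumes a: "a \<in> mh h"
  shows "(\<lambda>_::nat. a) \<in> Aubry phi"
proof -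
  define x where "x = (\<lambda>_::nat. a)"
  have a1: "a \<in> {0..1}" "h a a = hs" using a by (auto simp: mh_def)
  have xX: "x \<in> Xs" using const_Xs[OF a1(1)] by (simp add: x_def)
  have up: "Seps phi x x e \<le> 0" if e: "e > 0" for e
  proof -
    have B1: "x \<in> Bset x x 1 e" using xX e by (simp add: Bset_def dX_self x_def)
    have E1: "(\<Sum>i<(1::nat). L2 (x i) (x (Suc i))) + u (x 1) - u (x 0) = 0"
      using a1 by (simp add: x_def L2_def)
    have "ereal 0 \<in> {ereal ((\<Sum>i<n. L2 (z i) (z (Suc i))) + u (z n) - u (z 0)) | n z. n \<ge> 1 \<and> z \<in> Bset x x n e}"
      apply (intro CollectI exI[where x=1] exI[where x=x])
      using B1 E1 by auto
    then have "Inf {ereal ((\<Sum>i<n. L2 (z i) (z (Suc i))) + u (z n) - u (z 0)) | n z. n \<ge> 1 \<and> z \<in> Bset x x n e} \<le> ereal 0"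
      by (rule Inf_lower)
    then show ?thesis unfolding Seps_eq by (simp add: zero_ereal_def)
  qed
  have low: "ereal (- 4 * Bu * e) \<le> Seps phi x x e" if e: "e > 0" for e
    unfolding Seps_eq
  proof (rule Inf_greatest, clarify)
    fix n z assume n: "1 \<le> n" and z: "z \<in> Bset x x n e"
    have zX: "z \<in> Xs" and d1: "dX x z < e" and d2: "dX ((shift ^^ n) z) x < e" using z by (auto simp: Bset_def)
    have yX: "(shift ^^ n) z \<in> Xs" by (rule Xs_funpow_shift[OF zX])
    have "\<bar>x 0 - z 0\<bar> \<le> 2 * dX x z" using coord_le_dX[OF xX zX, of 0] by simp
    then have 1: "\<bar>a - z 0\<bar> \<le> 2 * e" using d1 by (simp add: x_def)
    have "\<bar>(shift ^^ n) z 0 - x 0\<bar> \<le> 2 * dX ((shift ^^ n) z) x" using coord_le_dX[OF yX xX, of 0] by simp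
    then have 2: "\<bar>z n - a\<bar> \<le> 2 * e" using d2 by (simp add: x_def funpow_shift)
    have "\<bar>z n - z 0\<bar> \<le> 4 * e" using 1 2 by linarith
    then have "Bu * \<bar>z n - z 0\<bar> \<le> Bu * (4 * e)" using Bupos by (simp add: mult_left_mono)
    moreover have "\<bar>u (z n) - u (z 0)\<bar> \<le> Bu * \<bar>z n - z 0\<bar>" by (rule ulip[OF Xs_in[OF zX] Xs_in[OF zX]])
    moreover have "0 \<le> (\<Sum>i<n. L2 (z i) (z (Suc i)))" by (rule sumL2_nonneg[OF zX])
    ultimately show "ereal (- 4 * Bu * e) \<le> ereal ((\<Sum>i<n. L2 (z i) (z (Suc i))) + u (z n) - u (z 0))"
      by simp
  qed
  have lim: "((\<lambda>e. Seps phi x x e) \<longlongrightarrow> 0) (at_right 0)"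
  proof (rule tendsto_sandwich[where f="\<lambda>e. ereal (- 4 * Bu * e)" and h="\<lambda>_. 0"])
    show "\<forall>\<^sub>F n in at_right 0. ereal (- 4 * Bu * n) \<le> Seps phi x x n"
      using eventually_at_right_less[of "0::real"] by eventually_elim (rule low)
    show "\<forall>\<^sub>F n in at_right 0. Seps phi x x n \<le> 0"
      using eventually_at_right_less[of "0::real"] by eventually_elim (rule up)
    have "((\<lambda>e. - 4 * Bu * e) \<longlongrightarrow> - 4 * Bu * 0) (at_right (0::real))"
      by (intro tendsto_intros)
    then show "((\<lambda>e. ereal (- 4 * Bu * e)) \<longlongrightarrow> 0) (at_right 0)"
      by (simp add: zero_ereal_def)
    show "((\<lambda>_. 0) \<longlongrightarrow> (0::ereal)) (at_right 0)" by simp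
  qed
  have "Mane phi x x = 0" unfolding Mane_def by (rule tendsto_Lim[OF trivial_limit_at_right_real lim])
  then show ?thesis using xX by (simp add: Aubry_def x_def)
qed

end



context tw begin

lemma Aubry_sub: "Aubry phi \<subseteq> (\<lambda>a. (\<lambda>_::nat. a)) ` mh h"
proof
  fix x assume "x \<in> Aubry phi"
  then have xX: "x \<in> Xs" and M0: "Mane phi x x = 0" by (auto simp: Aubry_def)
  show "x \<in> (\<lambda>a. (\<lambda>_::nat. a)) ` mh h"
  proof (cases "\<forall>k. Q (x k) (x (Suc k)) = 0")
    case True
    then have "x = (\<lambda>_. x 0) \<and> x 0 \<in> mh h" using const_of_Q[OF xX] by blast
    then show ?thesis by (metis image_eqI)
  next
    case False
    define k where "k = (LEAST k. Q (x k) (x (Suc k)) \<noteq> 0)"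
    have qk: "Q (x k) (x (Suc k)) \<noteq> 0" using False unfolding k_def by (metis (mono_tags, lifting) LeastI_ex)
    have below: "Q (x j) (x (Suc j)) = 0" if "j < k" for j using that unfolding k_def using not_less_Least by blast
    define q where "q = Q (x k) (x (Suc k))"
    have "0 \<le> q" unfolding q_def by (rule Q_nonneg[OF Xs_in[OF xX] Xs_in[OF xX]])
    then have q: "q > 0" using qk unfolding q_def by simp
    have xj: "j \<le> k \<Longrightarrow> x j = x 0" for j
    proof (induction j)
      case 0 then show ?case by simp
    next
      case (Suc j)
      then have "j < k" by simp
      then have "Q (x j) (x (Suc j)) = 0" by (rule below)
      then have "x j = x (Suc j)" using Q_zero[OF Xs_in[OF xX] Xs_in[OF xX]] by blast
      then show ?case using Suc by simp
    qed
    have dpos: "x (Suc k) \<noteq> x k" if "0 < k"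
    proof
      assume eq: "x (Suc k) = x k"
      have "k - 1 < k" using that by simp
      then have "Q (x (k - 1)) (x (Suc (k - 1))) = 0" by (rule below)
      then have "h (x (Suc (k - 1))) (x (Suc (k - 1))) = hs" using Q_zero[OF Xs_in[OF xX] Xs_in[OF xX]] by blast
      then have "h (x k) (x k) = hs" using that by simp
      then have "q = 0" using eq by (simp add: q_def Q_def)
      then show False using q by simp
    qed
    obtain \<eta> where \<eta>0: "\<eta> > 0" and \<eta>1: "\<forall>a b. a \<in> {0..1} \<longrightarrow> b \<in> {0..1} \<longrightarrow> \<bar>a - x k\<bar> < \<eta> \<longrightarrow> \<bar>b - x (Suc k)\<bar> < \<eta> \<longrightarrow> \<bar>Q a b - Q (x k) (x (Suc k))\<bar> < q/2"
      using cont_pt[OF cont_Q Xs_in[OF xX, of k] Xs_in[OF xX, of "Suc k"], of "q/2"] q by auto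
    have \<eta>: "\<And>a b. a \<in> {0..1} \<Longrightarrow> b \<in> {0..1} \<Longrightarrow> \<bar>a - x k\<bar> < \<eta> \<Longrightarrow> \<bar>b - x (Suc k)\<bar> < \<eta> \<Longrightarrow> q/2 < Q a b"
    proof -
      fix a b assume "a \<in> {0..1}" "b \<in> {0..1}" "\<bar>a - x k\<bar> < \<eta>" "\<bar>b - x (Suc k)\<bar> < \<eta>"
      then have "\<bar>Q a b - q\<bar> < q/2" using \<eta>1 unfolding q_def by blast
      then show "q/2 < Q a b" by linarith
    qed
    define d where "d = \<bar>x (Suc k) - x k\<bar>"
    define e where "e = min (\<eta> / 2^(k+2)) (min (q / (16*(Bu+1))) (if k = 0 then 1 else d / 2^(k+3)))"
    have e1: "e \<le> \<eta> / 2^(k+2)" and e2: "e \<le> q / (16*(Bu+1))" and e3: "k \<noteq> 0 \<Longrightarrow> e \<le> d / 2^(k+3)"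
      unfolding e_def by auto
    have dp: "k \<noteq> 0 \<Longrightarrow> d > 0" using dpos unfolding d_def by simp
    have epos: "e > 0" unfolding e_def using \<eta>0 q Bupos dp by auto
    have bound: "ereal (q/4) \<le> Seps phi x x e"
      unfolding Seps_eq
    proof (rule Inf_greatest, clarify)
      fix n z assume n: "1 \<le> n" and z: "z \<in> Bset x x n e"
      have zX: "z \<in> Xs" and d1: "dX x z < e" and d2: "dX ((shift ^^ n) z) x < e" using z by (auto simp: Bset_def)
      have yX: "(shift ^^ n) z \<in> Xs" by (rule Xs_funpow_shift[OF zX])
      have cSk: "\<bar>x (Suc k) - z (Suc k)\<bar> < 2^(k+2) * e"
      proof -
        have "\<bar>x (Suc k) - z (Suc k)\<bar> \<le> 2 ^ Suc (Suc k) * dX x z" by (rule coord_le_dX[OF xX zX])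
        also have "\<dots> < 2 ^ Suc (Suc k) * e" using d1 by simp
        finally show ?thesis by simp
      qed
      show "ereal (q/4) \<le> ereal ((\<Sum>i<n. L2 (z i) (z (Suc i))) + u (z n) - u (z 0))"
      proof (cases "k < n")
        case True
        have "\<bar>x k - z k\<bar> \<le> 2 ^ Suc k * dX x z" by (rule coord_le_dX[OF xX zX])
        also have "\<dots> < 2 ^ Suc k * e" using d1 by simp
        also have "\<dots> \<le> 2 ^ Suc k * (\<eta> / 2^(k+2))" using e1 by (intro mult_left_mono) auto
        also have "\<dots> = \<eta> / 2" by (simp add: field_simps)
        finally have ck: "\<bar>z k - x k\<bar> < \<eta>" using \<eta>0 by linarith
        have "2^(k+2) * e \<le> 2^(k+2) * (\<eta> / 2^(k+2))" using e1 by (intro mult_left_mono) auto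
        then have "2^(k+2) * e \<le> \<eta>" by simp
        then have ck1: "\<bar>z (Suc k) - x (Suc k)\<bar> < \<eta>" using cSk by linarith
        have Qz: "q/2 < Q (z k) (z (Suc k))" by (rule \<eta>[OF Xs_in[OF zX] Xs_in[OF zX] ck ck1])
        have "Q (z k) (z (Suc k)) \<le> L2 (z k) (z (Suc k))" by (rule L2_ge_Q[OF Xs_in[OF zX] Xs_in[OF zX]])
        also have "\<dots> \<le> (\<Sum>i<n. L2 (z i) (z (Suc i)))"
          by (rule member_le_sum) (use True L2_nonneg Xs_in[OF zX] in auto)
        finally have S1: "q/2 < (\<Sum>i<n. L2 (z i) (z (Suc i)))" using Qz by linarith
        have "\<bar>x 0 - z 0\<bar> \<le> 2 * dX x z" using coord_le_dX[OF xX zX, of 0] by simp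
        then have c0: "\<bar>x 0 - z 0\<bar> \<le> 2 * e" using d1 by simp
        have "\<bar>(shift ^^ n) z 0 - x 0\<bar> \<le> 2 * dX ((shift ^^ n) z) x" using coord_le_dX[OF yX xX, of 0] by simp
        then have cn: "\<bar>z n - x 0\<bar> \<le> 2 * e" using d2 by (simp add: funpow_shift)
        have "\<bar>z n - z 0\<bar> \<le> 4 * e" using c0 cn by linarith
        then have "Bu * \<bar>z n - z 0\<bar> \<le> Bu * (4 * e)" using Bupos by (simp add: mult_left_mono)
        also have "\<dots> \<le> Bu * (4 * (q / (16*(Bu+1))))" using e2 Bupos by (intro mult_left_mono) auto
        also have "\<dots> = q/4 * (Bu / (Bu + 1))" using Bupos by (simp add: field_simps)
        also have "\<dots> \<le> q/4 * 1" using Bupos q by (intro mult_left_mono) auto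
        finally have "Bu * \<bar>z n - z 0\<bar> \<le> q/4" by simp
        moreover have "\<bar>u (z n) - u (z 0)\<bar> \<le> Bu * \<bar>z n - z 0\<bar>" by (rule ulip[OF Xs_in[OF zX] Xs_in[OF zX]])
        ultimately have "q/4 \<le> (\<Sum>i<n. L2 (z i) (z (Suc i))) + u (z n) - u (z 0)" using S1 by linarith
        then show ?thesis by simp
      next
        case False
        then have kpos: "k \<noteq> 0" and nk: "n \<le> k" using n by auto
        have dXnn: "0 \<le> dX ((shift ^^ n) z) x" unfolding dX_def
          by (rule suminf_nonneg[OF summable_dX[OF yX xX]]) simp
        define m where "m = k + 1 - n"
        have mk: "m \<le> k" and nm: "n + m = Suc k" using nk n unfolding m_def by auto
        have "\<bar>(shift ^^ n) z m - x m\<bar> \<le> 2 ^ Suc m * dX ((shift ^^ n) z) x" by (rule coord_le_dX[OF yX xX])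
        also have "\<dots> \<le> 2 ^ (k+2) * dX ((shift ^^ n) z) x"
          using mk dXnn by (intro mult_right_mono power_increasing) auto
        also have "\<dots> < 2 ^ (k+2) * e" using d2 by simp
        finally have c2: "\<bar>z (Suc k) - x k\<bar> < 2 ^ (k+2) * e" using xj[OF mk] xj[of k] nm by (simp add: funpow_shift)
        have "d < 2 ^ (k+2) * e + 2 ^ (k+2) * e" unfolding d_def using c2 cSk by linarith
        also have "\<dots> = 2 ^ (k+3) * e" by (simp add: power_add)
        also have "\<dots> \<le> 2 ^ (k+3) * (d / 2^(k+3))" using e3[OF kpos] by (intro mult_left_mono) auto
        also have "\<dots> = d" by simp
        finally show ?thesis by simp
      qed
    qed
    have "Seps phi x x e \<le> Mane phi x x" unfolding Mane_SUP by (rule SUP_upper) (simp add: epos)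
    then have "ereal (q/4) \<le> 0" using M0 bound by (metis order_trans)
    then show ?thesis using q by simp
  qed
qed

end

theorem theorem1:
  fixes h d1 d2 d11 d12 d21 d22 :: "real \<Rightarrow> real \<Rightarrow> real"
  assumes "C2_square h d1 d2 d11 d12 d21 d22"
    and "\<forall>x\<in>{0..1}. \<forall>y\<in>{0..1}. d12 x y < 0"
  shows "Mather (\<lambda>x. h (x 0) (x 1)) = Aubry (\<lambda>x. h (x 0) (x 1)) \<and>
         Aubry (\<lambda>x. h (x 0) (x 1)) = (\<lambda>a. (\<lambda>_::nat. a)) ` mh h"
proof -
  note C2 = assms(1)[unfolded C2_square_def]
  have hd1: "\<And>x y. x \<in> {0..1} \<Longrightarrow> y \<in> {0..1} \<Longrightarrow> ((\<lambda>t. h t y) has_real_derivative d1 x y) (at x within {0..1})"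
    using C2 by blast
  have hd12: "\<And>x y. x \<in> {0..1} \<Longrightarrow> y \<in> {0..1} \<Longrightarrow> ((\<lambda>t. d1 x t) has_real_derivative d12 x y) (at y within {0..1})"
    using C2 by blast
  have hcont: "continuous_on ({0..1}\<times>{0..1}) (case_prod h)" using C2 by blast
  have d1cont: "continuous_on ({0..1}\<times>{0..1}) (case_prod d1)" using C2 by blast
  have d12cont: "continuous_on ({0..1}\<times>{0..1}) (case_prod d12)" using C2 by blast
  have sq1: "compact ({0..1::real}\<times>{0..1::real})" using compact_Icc[of "0::real" 1] by (intro compact_Times)
  have sq2: "({0..1::real}\<times>{0..1::real}) \<noteq> {}" by (simp add: Sigma_empty_iff)
  note sq = sq1 sq2
  obtain p0 where p0: "p0 \<in> {0..1}\<times>{0..1}" "\<forall>p\<in>{0..1}\<times>{0..1}. case_prod d12 p \<le> case_prod d12 p0"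
    using continuous_attains_sup[OF sq d12cont] by blast
  define c where "c = - case_prod d12 p0"
  have cpos: "c > 0" using p0(1) assms(2) by (auto simp: c_def split: prod.splits)
  have neg: "\<And>x y. x \<in> {0..1} \<Longrightarrow> y \<in> {0..1} \<Longrightarrow> d12 x y \<le> - c"
    using p0(2) by (force simp: c_def)
  have diag: "continuous_on {0..1} (\<lambda>t. f t t)" if fc: "continuous_on ({0..1}\<times>{0..1}) (case_prod f)" for f :: "real \<Rightarrow> real \<Rightarrow> real"
  proof -
    have "continuous_on {0..1} (\<lambda>t::real. case_prod f (t, t))"
      by (rule continuous_on_compose2[OF fc]) (auto intro!: continuous_intros)
    then show ?thesis by simp
  qed
  have dcont: "continuous_on {0..1} (\<lambda>t. d1 t t)" by (rule diag[OF d1cont])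
  define u where "u t = - integral {0..t} (\<lambda>s. d1 s s)" for t
  have du: "(u has_real_derivative - d1 t t) (at t within {0..1})" if "t \<in> {0..1}" for t
    unfolding u_def[abs_def] by (rule DERIV_minus[OF integral_has_real_derivative[OF dcont that]])
  obtain B where B: "\<forall>y\<in>(\<lambda>t. d1 t t) ` {0..1}. norm y \<le> B"
    using compact_imp_bounded[OF compact_continuous_image[OF dcont compact_Icc]] bounded_iff by metis
  then have Bt: "\<And>t. t \<in> {0..1} \<Longrightarrow> \<bar>d1 t t\<bar> \<le> B" by auto
  have Bpos: "0 \<le> B" using Bt[of 0] by simp
  have ulip1: "\<bar>u b - u a\<bar> \<le> B * \<bar>b - a\<bar>" if ab: "a \<le> b" "a \<in> {0..1}" "b \<in> {0..1}" for a b
  proof -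
    obtain \<xi> where \<xi>: "\<xi> \<in> {a..b}" "u b - u a = - d1 \<xi> \<xi> * (b - a)"
      using mvt_sub[of a b "{0..1}" u "\<lambda>t. - d1 t t", OF ab(1) _ du] ab by auto
    have "\<xi> \<in> {0..1}" using \<xi>(1) ab by auto
    then have "\<bar>d1 \<xi> \<xi>\<bar> \<le> B" by (rule Bt)
    then have "\<bar>d1 \<xi> \<xi>\<bar> * (b - a) \<le> B * (b - a)" using ab by (intro mult_right_mono) auto
    then show ?thesis using \<xi>(2) ab by (simp add: abs_mult)
  qed
  have ulip: "\<bar>u a - u b\<bar> \<le> B * \<bar>a - b\<bar>" if "a \<in> {0..1}" "b \<in> {0..1}" for a b
  proof (cases "a \<le> b")
    case True then show ?thesis using ulip1[OF True that] by (simp add: abs_minus_commute)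
  next
    case False then show ?thesis using ulip1[of b a] that by simp
  qed
  have ucont: "continuous_on {0..1} u"
    unfolding continuous_on_eq_continuous_within using du DERIV_continuous by blast
  have key: "\<And>x y. x \<in> {0..1} \<Longrightarrow> y \<in> {0..1} \<Longrightarrow> h x y - h y y + u x - u y \<ge> c/2*(x-y)^2"
    by (rule key_ineq[OF hd1 hd12 neg du])
  have hdiag: "continuous_on {0..1} (\<lambda>t. h t t)" by (rule diag[OF hcont])
  obtain a0 where a0: "a0 \<in> {0..1}" "\<forall>t\<in>{0..1}. h a0 a0 \<le> h t t"
    using continuous_attains_inf[OF compact_Icc _ hdiag] by auto
  have hs: "hstar h = h a0 a0" unfolding hstar_def
    by (rule cInf_eq_minimum) (use a0 in auto)
  interpret tw h u c B
  proof
    show "\<And>x y. x \<in> {0..1} \<Longrightarrow> y \<in> {0..1} \<Longrightarrow> h x y - h y y + u x - u y \<ge> c/2*(x-y)^2" by (rule key)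
    show "c > 0" by (rule cpos)
    show "\<And>a b. a \<in> {0..1} \<Longrightarrow> b \<in> {0..1} \<Longrightarrow> \<bar>u a - u b\<bar> \<le> B * \<bar>a - b\<bar>" by (rule ulip)
    show "continuous_on ({0..1}\<times>{0..1}) (case_prod h)" by (rule hcont)
    show "continuous_on {0..1} u" by (rule ucont)
    show "\<And>a. a \<in> {0..1} \<Longrightarrow> hstar h \<le> h a a" using a0 hs by simp
    show "\<exists>a\<in>{0..1}. h a a = hstar h" using a0 hs by auto
    show "B \<ge> 0" by (rule Bpos)
  qed
  have M: "Mather phi = (\<lambda>a. (\<lambda>_::nat. a)) ` mh h" using Mather_sub Mather_sup by blast
  have A: "Aubry phi = (\<lambda>a. (\<lambda>_::nat. a)) ` mh h" using Aubry_sub Aubry_sup by blast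
  show ?thesis using M A by simp
qed

end
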